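(* Let $T=(T_a,T_b)$ be a rooted binary tree on $n$ leaves, where $T_a$ and $T_b$ have $n_a$ and $n_b$ leaves respectively. If $n_a\neq n_b$ and both $n_a$ and $n_b$ are odd, then $\mathcal{C}(T)>c_n$, i.e. $T$ does not have minimal Colless index.
   Context: A rooted binary tree with $n\geq 2$ leaves is a rooted tree whose root has degree 2 and all other internal nodes have degree 3; for $n=1$ it is a single node. $T=(T_a,T_b)$ denotes the decomposition into the two subtrees rooted at the children of the root. For an internal node $v$ with children $v_1,v_2$, let $\kappa(v_i)$ be the number of leaves descending from $v_i$ ($1$ if a leaf). The Colless index is $\mathcal{C}(T)=\sum_v|\kappa(v_1)-\kappa(v_2)|$ over internal nodes $v$; $c_n$ is the minimum of $\mathcal{C}$ over rooted binary trees with $n$ leaves. *)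

theory Defs
  imports Main
begin

datatype btree = Leaf | Node btree btree

fun leaves :: "btree \<Rightarrow> nat" where
  "leaves Leaf = 1"
| "leaves (Node ta tb) = leaves ta + leaves tb"

fun colless :: "btree \<Rightarrow> nat" where
  "colless Leaf = 0"
| "colless (Node ta tb) =
     nat \<bar>int (leaves ta) - int (leaves tb)\<bar> + colless ta + colless tb"

definition min_colless :: "nat \<Rightarrow> nat" where
  "min_colless n = (LEAST c. \<exists>t. leaves t = n \<and> colless t = c)"

end

theory Submission
  imports Defs
begin

function mb :: "nat \<Rightarrow> btree" where
  "mb n = (if n \<le> 1 then Leaf else Node (mb ((n+1) div 2)) (mb (n div 2)))"
  by auto
termination by (relation "measure id") auto

declare mb.simps[simp del]

lemma leaves_pos: "leaves t \<ge> 1"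
  by (induction t) auto

lemma leaves_mb: "n \<ge> 1 \<Longrightarrow> leaves (mb n) = n"
proof (induction n rule: less_induct)
  case (less n)
  show ?case
  proof (cases "n \<le> 1")
    case True then show ?thesis using less by (simp add: mb.simps)
  next
    case False
    then have "leaves (mb ((n+1) div 2)) = (n+1) div 2" "leaves (mb (n div 2)) = n div 2"
      using less by auto
    then show ?thesis using False by (subst mb.simps) auto
  qed
qed

definition F :: "nat \<Rightarrow> int" where "F n = int (colless (mb n))"

lemma F0: "F 0 = 0" and F1: "F 1 = 0"
  by (simp_all add: F_def mb.simps)

lemma F_even: "k \<ge> 1 \<Longrightarrow> F (2*k) = 2 * F k"
proof -
  assume k: "k \<ge> 1"
  have "mb (2*k) = Node (mb k) (mb k)"
    using k by (subst mb.simps) auto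
  then show ?thesis using k by (simp add: F_def leaves_mb)
qed

lemma F_odd: "k \<ge> 1 \<Longrightarrow> F (2*k+1) = F k + F (k+1) + 1"
proof -
  assume k: "k \<ge> 1"
  have "mb (2*k+1) = Node (mb (k+1)) (mb k)"
    using k by (subst mb.simps) auto
  then show ?thesis using k by (simp add: F_def leaves_mb)
qed

lemma F_one: "b \<ge> 1 \<Longrightarrow> F (b+1) \<le> F b + int b - 1"
proof (induction b rule: less_induct)
  case (less b)
  show ?case
  proof (cases "b = 1")
    case True
    have "F 2 = 0" using F_even[of 1] F1 by simp
    then show ?thesis using True F1 by (simp add: numeral_2_eq_2)
  next
    case False
    show ?thesis
    proof (cases "even b")
      case True
      then obtain q where q: "b = 2*q" by blast
      with False less.prems have q1: "q \<ge> 1" by auto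
      have ih: "F (q+1) \<le> F q + int q - 1" using less.IH[of q] q q1 by auto
      have "F (b+1) = F q + F (q+1) + 1" using q F_odd[OF q1] by simp
      moreover have "F b = 2 * F q" using q F_even[OF q1] by simp
      ultimately show ?thesis using ih q q1 by simp
    next
      case odd: False
      then obtain q where q: "b = 2*q+1" using oddE by blast
      with False have q1: "q \<ge> 1" by auto
      have ih: "F (q+1) \<le> F q + int q - 1" using less.IH[of q] q q1 by auto
      have "F (b+1) = 2 * F (q+1)" using q F_even[of "q+1"] by simp
      moreover have "F b = F q + F (q+1) + 1" using q F_odd[OF q1] by simp
      ultimately show ?thesis using ih q q1 by simp
    qed
  qed
qed

lemma F_one_strict: "b \<ge> 3 \<Longrightarrow> odd b \<Longrightarrow> F (b+1) < F b + int b - 1"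
proof -
  assume b: "b \<ge> 3" "odd b"
  then obtain q where q: "b = 2*q+1" using oddE by blast
  with b have q1: "q \<ge> 1" by auto
  have ih: "F (q+1) \<le> F q + int q - 1" using F_one[OF q1] .
  have "F (b+1) = 2 * F (q+1)" using q F_even[of "q+1"] by simp
  moreover have "F b = F q + F (q+1) + 1" using q F_odd[OF q1] by simp
  ultimately show ?thesis using ih q q1 by simp
qed

lemma F_ineq: "a \<ge> 1 \<Longrightarrow> b \<ge> 1 \<Longrightarrow> F (a+b) \<le> F a + F b + \<bar>int a - int b\<bar>"
proof (induction "a+b" arbitrary: a b rule: less_induct)
  case less
  show ?case
  proof (cases "a = 1 \<or> b = 1")
    case True
    then show ?thesis
    proof
      assume "a = 1" then show ?thesis using F_one[of b] less.prems F1 by (simp add: add.commute)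
    next
      assume "b = 1" then show ?thesis using F_one[of a] less.prems F1 by simp
    qed
  next
    case False
    with less.prems have a2: "a \<ge> 2" and b2: "b \<ge> 2" by auto
    show ?thesis
    proof (cases "even a")
      case ea: True
      then obtain p where p: "a = 2*p" by blast
      with a2 have p1: "p \<ge> 1" by auto
      show ?thesis
      proof (cases "even b")
        case True
        then obtain q where q: "b = 2*q" by blast
        with b2 have q1: "q \<ge> 1" by auto
        have ih: "F (p+q) \<le> F p + F q + \<bar>int p - int q\<bar>"
          using less.hyps[of p q] p q p1 q1 by auto
        have "F (a+b) = 2 * F (p+q)" using F_even[of "p+q"] p q p1 by (simp add: algebra_simps)
        moreover have "F a = 2 * F p" "F b = 2 * F q" using F_even p q p1 q1 by auto
        ultimately show ?thesis using ih p q by (simp add: algebra_simps; arith)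
      next
        case False
        then obtain q where q: "b = 2*q+1" using oddE by blast
        with b2 have q1: "q \<ge> 1" by auto
        have ih1: "F (p+q) \<le> F p + F q + \<bar>int p - int q\<bar>"
          using less.hyps[of p q] p q p1 q1 by auto
        have ih2: "F (p+(q+1)) \<le> F p + F (q+1) + \<bar>int p - int (q+1)\<bar>"
          using less.hyps[of p "q+1"] p q p1 q1 by auto
        have "F (a+b) = F (p+q) + F (p+q+1) + 1" using F_odd[of "p+q"] p q p1 by (simp add: algebra_simps)
        moreover have "F a = 2 * F p" "F b = F q + F (q+1) + 1" using F_even F_odd p q p1 q1 by auto
        ultimately show ?thesis using ih1 ih2 p q by (simp add: algebra_simps; arith)
      qed
    next
      case oa: False
      then obtain p where p: "a = 2*p+1" using oddE by blast
      with a2 have p1: "p \<ge> 1" by auto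
      show ?thesis
      proof (cases "even b")
        case True
        then obtain q where q: "b = 2*q" by blast
        with b2 have q1: "q \<ge> 1" by auto
        have ih1: "F (q+p) \<le> F q + F p + \<bar>int q - int p\<bar>"
          using less.hyps[of q p] p q p1 q1 by auto
        have ih2: "F (q+(p+1)) \<le> F q + F (p+1) + \<bar>int q - int (p+1)\<bar>"
          using less.hyps[of q "p+1"] p q p1 q1 by auto
        have "F (a+b) = F (p+q) + F (p+q+1) + 1" using F_odd[of "p+q"] p q p1 by (simp add: algebra_simps)
        moreover have "F b = 2 * F q" "F a = F p + F (p+1) + 1" using F_even F_odd p q p1 q1 by auto
        ultimately show ?thesis using ih1 ih2 p q by (simp add: algebra_simps; arith)
      next
        case False
        then obtain q where q: "b = 2*q+1" using oddE by blast
        with b2 have q1: "q \<ge> 1" by auto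
        have ih1: "F (p+(q+1)) \<le> F p + F (q+1) + \<bar>int p - int (q+1)\<bar>"
          using less.hyps[of p "q+1"] p q p1 q1 by auto
        have ih2: "F ((p+1)+q) \<le> F (p+1) + F q + \<bar>int (p+1) - int q\<bar>"
          using less.hyps[of "p+1" q] p q p1 q1 by auto
        have "F (a+b) = 2 * F (p+q+1)" using F_even[of "p+q+1"] p q by (simp add: algebra_simps)
        moreover have "F a = F p + F (p+1) + 1" "F b = F q + F (q+1) + 1" using F_odd p q p1 q1 by auto
        ultimately show ?thesis using ih1 ih2 p q by (simp add: algebra_simps; arith)
      qed
    qed
  qed
qed

lemma F_strict: "a \<ge> 1 \<Longrightarrow> b \<ge> 1 \<Longrightarrow> odd a \<Longrightarrow> odd b \<Longrightarrow> a \<noteq> b \<Longrightarrow>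
   F (a+b) < F a + F b + \<bar>int a - int b\<bar>"
proof -
  assume a1: "a \<ge> 1" and b1: "b \<ge> 1" and oa: "odd a" and ob: "odd b" and ne: "a \<noteq> b"
  show ?thesis
  proof (cases "a = 1 \<or> b = 1")
    case True
    then show ?thesis
    proof
      assume a: "a = 1"
      with ne ob b1 have "b \<ge> 3" by presburger
      then show ?thesis using F_one_strict[of b] a ob F1 by (simp add: add.commute)
    next
      assume b: "b = 1"
      with ne oa a1 have "a \<ge> 3" by presburger
      then show ?thesis using F_one_strict[of a] b oa F1 by simp
    qed
  next
    case False
    obtain p where p: "a = 2*p+1" using oa oddE by blast
    obtain q where q: "b = 2*q+1" using ob oddE by blast
    have p1: "p \<ge> 1" and q1: "q \<ge> 1" using False p q by auto
    have pq: "p \<noteq> q" using ne p q by auto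
    have ih1: "F (p+(q+1)) \<le> F p + F (q+1) + \<bar>int p - int (q+1)\<bar>"
      using F_ineq[of p "q+1"] p1 by auto
    have ih2: "F ((p+1)+q) \<le> F (p+1) + F q + \<bar>int (p+1) - int q\<bar>"
      using F_ineq[of "p+1" q] q1 by auto
    have "F (a+b) = 2 * F (p+q+1)" using F_even[of "p+q+1"] p q by (simp add: algebra_simps)
    moreover have "F a = F p + F (p+1) + 1" "F b = F q + F (q+1) + 1" using F_odd p q p1 q1 by auto
    ultimately show ?thesis using ih1 ih2 p q pq by (simp add: algebra_simps; arith)
  qed
qed

lemma colless_ge: "int (colless t) \<ge> F (leaves t)"
proof (induction t)
  case Leaf then show ?case using F1 by simp
next
  case (Node ta tb)
  have "F (leaves ta + leaves tb) \<le> F (leaves ta) + F (leaves tb) + \<bar>int (leaves ta) - int (leaves tb)\<bar>"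
    using F_ineq leaves_pos by auto
  then show ?case using Node by simp
qed

theorem theorem7:
  fixes ta tb :: btree
  assumes "leaves ta \<noteq> leaves tb"
    and "odd (leaves ta)" and "odd (leaves tb)"
  shows "colless (Node ta tb) > min_colless (leaves (Node ta tb))"
proof -
  let ?n = "leaves ta + leaves tb"
  have n1: "?n \<ge> 1" using leaves_pos[of ta] by simp
  have "min_colless ?n \<le> colless (mb ?n)"
    unfolding min_colless_def by (rule Least_le) (use leaves_mb[OF n1] in blast)
  moreover have "F ?n < F (leaves ta) + F (leaves tb) + \<bar>int (leaves ta) - int (leaves tb)\<bar>"
    using F_strict assms leaves_pos by auto
  moreover have "F (leaves ta) \<le> int (colless ta)" "F (leaves tb) \<le> int (colless tb)"
    using colless_ge by auto
  ultimately show ?thesis by (simp add: F_def)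
qed

end
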